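(* Let $P$ be a causal program and $\langle P_b,P_t\rangle$ a partition of $P$ such that no atom occurring in the head of a rule of $P_t$ occurs in $P_b$. An interpretation $I$ is a causal stable model of $P$ if and only if there is a causal stable model $J$ of $P_b$ such that $I$ is a causal stable model of the program $J\cup P_t$, where an interpretation $J$ is identified with the program $\{1: A\leftarrow J(A)\mid A\in At\}$ (a rule with label $1$ whose body is the term $J(A)$).
   Context: Fix a set of labels $Lb$ and a set of atoms $At$. Terms are built by $t::=l\mid\prod S\mid\sum S\mid t_1\cdot t_2$ with $l\in Lb$ and $S$ any (possibly empty or infinite) set of terms; $1:=\prod\emptyset$, $0:=\sum\emptyset$; finite sums/products written with $+$, $*$. Causal values are equivalence classes of terms modulo the axioms of a completely distributive complete lattice with meet $*$ and join $+$ together with: $t\cdot(u\cdot w)=(t\cdot u)\cdot w$; $t=t+u\cdot t\cdot w$ and $u\cdot t\cdot w=t*u\cdot t\cdot w$; $1\cdot t=t=t\cdot1$; $t\cdot0=0=0\cdot t$; $l\cdot l=l$ for labels $l$; $\cdot$ distributes over (possibly infinite) sums on both sides; for terms $c,d,e$ without $+$: $c\cdot d\cdot e=(c\cdot d)*(d\cdot e)$ if $d\ne1$, $c\cdot(d*e)=(c\cdot d)*(c\cdot e)$, $(c*d)\cdot e=(c\cdot e)*(d\cdot e)$. $\mathbf V$ is the set of values, ordered by $t\le u$ iff $t*u=t$; $\mathbf C\subseteq\mathbf V$ is the set of values with a representative without $+$. $G\le_{\max}t$ means $G\in\mathbf C$, $G\le t$ and no $G'\in\mathbf C$ has $G<G'\le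 t$. A causal query is $\psi:\mathbf C\times\mathbf V\to\{0,1\}$ with $\psi(G,t)\le\psi(G,u)$ whenever $t\ge u$; monotonic if $\psi(G,u)\le\psi(G',w)$ whenever $G\le G'$ (any $u,w$). A causal literal is $(\psi::A)$, $A\in At$ (atom $A$ occurs in it). Literals: $(\psi::A)$ (positive), $\neg(\psi::A)$ (negative), $\neg\neg(\psi::A)$ (consistent). A causal program is a set of rules $r:H\leftarrow B_1,\dots,B_m$ with $r\in Lb$ or $r=1$, $H\in At$, each $B_i$ a literal or a term. An interpretation is $I:At\to\mathbf V$, ordered pointwise. $I(\psi::A)=\sum\{G\le_{\max}I(A):\psi(G,I(A))=1\}$; $I(t)=t$ for terms; $I(\neg L)=1$ iff $I(L)=0$ (else $0$); $I(\neg\neg L)=1$ iff $I(L)\ne0$ (else $0$); $I\models L$ iff $I(L)\ne0$. $I$ is a causal model of $P$ iff $(I(B_1)*\dots*I(B_m))\cdot r\le I(H)$ for every rule (empty product $=1$). Reduct: $\psi^t(G,u)=1$ iff there is $G'\in\mathbf C$ with $G'\le G$, $G'\le_{\max}t$, $\psi(G',t)=1$ (else $0$). The reduct of $(\psi::A)$ w.r.t. $I$ is $(\psi::A)$ if $\psi$ is monotonic and $(\psi^{I(A)}::A)$ otherwise. $P^I$: (i) delete every rule whose body has a negative or consistent literal not satisfied by $I$, (ii) delete the remaining negative and consistent literals, (iii) replace each remaining causal literal by its reduct. $P^I$ has a least causal model; $I$ is a causal stable model of $P$ iff $I$ is the least causal model of $P^I$. *)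

theory Defs
  imports Main
begin

text \<open>Graphs are ordered by reverse inclusion (more edges = smaller);
  causal values are represented as sets of causal graphs closed under adding edges
  (ideals w.r.t. that order).\<close>

type_synonym 'l graph = "('l \<times> 'l) set"
type_synonym 'l val = "'l graph set"
type_synonym 'l query = "'l val \<Rightarrow> 'l val \<Rightarrow> bool"

definition causal_graph :: "'l graph \<Rightarrow> bool" where
  "causal_graph G \<longleftrightarrow> (\<forall>a b. (a, b) \<in> G \<longrightarrow> (a, a) \<in> G \<and> (b, b) \<in> G) \<and> trans G"

definition verts :: "'l graph \<Rightarrow> 'l set" where
  "verts G = {a. (a, a) \<in> G}"

definition gconcat :: "'l graph \<Rightarrow> 'l graph \<Rightarrow> 'l graph" where
  "gconcat G1 G2 = trancl (G1 \<union> G2 \<union> verts G1 \<times> verts G2)"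

definition up :: "'l graph \<Rightarrow> 'l val" where
  "up G = {H. causal_graph H \<and> G \<subseteq> H}"

definition is_value :: "'l val \<Rightarrow> bool" where
  "is_value t \<longleftrightarrow> (\<forall>G\<in>t. causal_graph G) \<and> (\<forall>G\<in>t. \<forall>H. causal_graph H \<and> G \<subseteq> H \<longrightarrow> H \<in> t)"

definition vlabel :: "'l \<Rightarrow> 'l val" where
  "vlabel l = up {(l, l)}"

definition vone :: "'l val" where
  "vone = Collect causal_graph"

definition vzero :: "'l val" where
  "vzero = {}"

definition vsum :: "'l val set \<Rightarrow> 'l val" where
  "vsum S = \<Union>S"

definition vprod :: "'l val set \<Rightarrow> 'l val" where
  "vprod S = Collect causal_graph \<inter> \<Inter>S"

definition vapp :: "'l val \<Rightarrow> 'l val \<Rightarrow> 'l val" where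
  "vapp t u = {H. causal_graph H \<and> (\<exists>G1\<in>t. \<exists>G2\<in>u. gconcat G1 G2 \<subseteq> H)}"

text \<open>the set C: values with a representative without +\<close>
definition is_cvalue :: "'l val \<Rightarrow> bool" where
  "is_cvalue G \<longleftrightarrow> (\<exists>g. causal_graph g \<and> G = up g)"

definition maxle :: "'l val \<Rightarrow> 'l val \<Rightarrow> bool" where
  "maxle G t \<longleftrightarrow> is_cvalue G \<and> G \<subseteq> t \<and> \<not> (\<exists>G'. is_cvalue G' \<and> G \<subset> G' \<and> G' \<subseteq> t)"

definition causal_query :: "'l query \<Rightarrow> bool" where
  "causal_query \<psi> \<longleftrightarrow> (\<forall>G t u. is_cvalue G \<and> is_value t \<and> is_value u \<and> u \<subseteq> t
        \<longrightarrow> (\<psi> G t \<longrightarrow> \<psi> G u))"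

definition monotonic_query :: "'l query \<Rightarrow> bool" where
  "monotonic_query \<psi> \<longleftrightarrow> (\<forall>G G' u w. is_cvalue G \<and> is_cvalue G' \<and> is_value u \<and> is_value w
        \<and> G \<subseteq> G' \<longrightarrow> (\<psi> G u \<longrightarrow> \<psi> G' w))"

text \<open>Body elements: positive causal literal, negative literal, consistent literal (double
  negation), or a term (represented by its value, since I(t) = t).\<close>
datatype ('a, 'l) body =
    Pos "'l query" 'a
  | Neg "'l query" 'a
  | Cons "'l query" 'a
  | Tm "'l val"

text \<open>Rules r : H <- B1, ..., Bm; label None stands for 1.\<close>
datatype ('a, 'l) rule = Rule (rlab: "'l option") (rhead: 'a) (rbody: "('a, 'l) body list")

type_synonym ('a, 'l) program = "('a, 'l) rule set"

fun body_queries :: "('a, 'l) body \<Rightarrow> 'l query set" where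
  "body_queries (Pos \<psi> A) = {\<psi>}"
| "body_queries (Neg \<psi> A) = {\<psi>}"
| "body_queries (Cons \<psi> A) = {\<psi>}"
| "body_queries (Tm t) = {}"

fun body_atoms :: "('a, 'l) body \<Rightarrow> 'a set" where
  "body_atoms (Pos \<psi> A) = {A}"
| "body_atoms (Neg \<psi> A) = {A}"
| "body_atoms (Cons \<psi> A) = {A}"
| "body_atoms (Tm t) = {}"

fun body_terms :: "('a, 'l) body \<Rightarrow> 'l val set" where
  "body_terms (Tm t) = {t}"
| "body_terms _ = {}"

definition rule_atoms :: "('a, 'l) rule \<Rightarrow> 'a set" where
  "rule_atoms r = {rhead r} \<union> \<Union> (body_atoms ` set (rbody r))"

definition causal_program :: "('a, 'l) program \<Rightarrow> bool" where
  "causal_program P \<longleftrightarrow> (\<forall>r\<in>P. \<forall>b\<in>set (rbody r).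
      (\<forall>\<psi>\<in>body_queries b. causal_query \<psi>) \<and> (\<forall>t\<in>body_terms b. is_value t))"

definition is_interp :: "('a \<Rightarrow> 'l val) \<Rightarrow> bool" where
  "is_interp I \<longleftrightarrow> (\<forall>A. is_value (I A))"

definition qval :: "('a \<Rightarrow> 'l val) \<Rightarrow> 'l query \<Rightarrow> 'a \<Rightarrow> 'l val" where
  "qval I \<psi> A = vsum {G. maxle G (I A) \<and> \<psi> G (I A)}"

fun bval :: "('a \<Rightarrow> 'l val) \<Rightarrow> ('a, 'l) body \<Rightarrow> 'l val" where
  "bval I (Pos \<psi> A) = qval I \<psi> A"
| "bval I (Neg \<psi> A) = (if qval I \<psi> A = vzero then vone else vzero)"
| "bval I (Cons \<psi> A) = (if qval I \<psi> A \<noteq> vzero then vone else vzero)"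
| "bval I (Tm t) = t"

fun rlabel :: "'l option \<Rightarrow> 'l val" where
  "rlabel None = vone"
| "rlabel (Some l) = vlabel l"

definition is_model :: "('a, 'l) program \<Rightarrow> ('a \<Rightarrow> 'l val) \<Rightarrow> bool" where
  "is_model P I \<longleftrightarrow> is_interp I \<and>
     (\<forall>r\<in>P. vapp (vprod (bval I ` set (rbody r))) (rlabel (rlab r)) \<subseteq> I (rhead r))"

definition reduct_query :: "'l query \<Rightarrow> 'l val \<Rightarrow> 'l query" where
  "reduct_query \<psi> t = (\<lambda>G u. \<exists>G'. is_cvalue G' \<and> G' \<subseteq> G \<and> maxle G' t \<and> \<psi> G' t)"

fun is_naf :: "('a, 'l) body \<Rightarrow> bool" where
  "is_naf (Neg \<psi> A) = True"
| "is_naf (Cons \<psi> A) = True"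
| "is_naf _ = False"

fun reduce_elem :: "('a \<Rightarrow> 'l val) \<Rightarrow> ('a, 'l) body \<Rightarrow> ('a, 'l) body" where
  "reduce_elem I (Pos \<psi> A) =
     Pos (if monotonic_query \<psi> then \<psi> else reduct_query \<psi> (I A)) A"
| "reduce_elem I b = b"

definition reduct :: "('a, 'l) program \<Rightarrow> ('a \<Rightarrow> 'l val) \<Rightarrow> ('a, 'l) program" where
  "reduct P I = {Rule (rlab r) (rhead r) (map (reduce_elem I) (filter (\<lambda>b. \<not> is_naf b) (rbody r))) | r.
      r \<in> P \<and> (\<forall>b\<in>set (rbody r). is_naf b \<longrightarrow> bval I b \<noteq> vzero)}"

definition least_model :: "('a, 'l) program \<Rightarrow> ('a \<Rightarrow> 'l val) \<Rightarrow> bool" where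
  "least_model P I \<longleftrightarrow> is_model P I \<and> (\<forall>J. is_model P J \<longrightarrow> (\<forall>A. I A \<subseteq> J A))"

definition stable_model :: "('a, 'l) program \<Rightarrow> ('a \<Rightarrow> 'l val) \<Rightarrow> bool" where
  "stable_model P I \<longleftrightarrow> least_model (reduct P I) I"

definition interp_prog :: "('a \<Rightarrow> 'l val) \<Rightarrow> ('a, 'l) program" where
  "interp_prog J = {Rule None A [Tm (J A)] | A. True}"

end

theory Submission
  imports Defs
begin

definition sat :: "('a \<Rightarrow> 'l val) \<Rightarrow> ('a, 'l) rule \<Rightarrow> bool" where
  "sat I r \<longleftrightarrow> vapp (vprod (bval I ` set (rbody r))) (rlabel (rlab r)) \<subseteq> I (rhead r)"

lemma is_model_sat: "is_model P I \<longleftrightarrow> is_interp I \<and> (\<forall>r\<in>P. sat I r)"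
  by (simp add: is_model_def sat_def)

lemma vapp_causal: "vapp t u \<subseteq> vone"
  by (auto simp: vapp_def vone_def)

lemma sat_vone: "I (rhead r) = vone \<Longrightarrow> sat I r"
  using vapp_causal by (simp add: sat_def)

lemma vprod_mono: "(\<forall>b\<in>set bs. f b \<subseteq> g b) \<Longrightarrow> vprod (f ` set bs) \<subseteq> vprod (g ` set bs)"
  by (auto simp: vprod_def)

lemma vapp_mono: "t \<subseteq> t' \<Longrightarrow> vapp t u \<subseteq> vapp t' u"
  by (auto simp: vapp_def)

lemma body_le:
  "(\<forall>b\<in>set bs. bval M b \<subseteq> bval N b) \<Longrightarrow>
   vapp (vprod (bval M ` set bs)) l \<subseteq> vapp (vprod (bval N ` set bs)) l"
  by (intro vapp_mono vprod_mono) simp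

lemma bval_cong: "(\<forall>A\<in>body_atoms b. I A = J A) \<Longrightarrow> bval I b = bval J b"
  by (cases b) (auto simp: qval_def)

lemma reduce_elem_cong: "(\<forall>A\<in>body_atoms b. I A = J A) \<Longrightarrow> reduce_elem I b = reduce_elem J b"
  by (cases b) auto

lemma body_atoms_sub: "b \<in> set (rbody r) \<Longrightarrow> body_atoms b \<subseteq> rule_atoms r"
  by (auto simp: rule_atoms_def)

lemma sat_cong:
  assumes "rule_atoms r \<subseteq> U" "\<forall>A\<in>U. I A = J A"
  shows "sat I r = sat J r"
proof -
  have "bval I ` set (rbody r) = bval J ` set (rbody r)"
  proof (rule image_cong[OF refl])
    fix b assume "b \<in> set (rbody r)"
    then have "body_atoms b \<subseteq> U" using assms(1) body_atoms_sub by blast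
    then show "bval I b = bval J b" using assms(2) by (intro bval_cong) blast
  qed
  moreover have "I (rhead r) = J (rhead r)" using assms by (auto simp: rule_atoms_def)
  ultimately show ?thesis by (simp add: sat_def)
qed

lemma reduct_img: "reduct P I = (\<lambda>r. Rule (rlab r) (rhead r) (map (reduce_elem I) (filter (\<lambda>b. \<not> is_naf b) (rbody r))))
   ` {r\<in>P. \<forall>b\<in>set (rbody r). is_naf b \<longrightarrow> bval I b \<noteq> vzero}"
  unfolding reduct_def by blast

lemma reduct_cong:
  assumes "\<forall>r\<in>P. \<forall>A\<in>rule_atoms r. I A = J A"
  shows "reduct P I = reduct P J"
proof -
  have h1: "map (reduce_elem I) (filter (\<lambda>b. \<not> is_naf b) (rbody r))
      = map (reduce_elem J) (filter (\<lambda>b. \<not> is_naf b) (rbody r))" if "r \<in> P" for r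
  proof (rule map_cong[OF refl])
    fix b assume "b \<in> set (filter (\<lambda>b. \<not> is_naf b) (rbody r))"
    then have "b \<in> set (rbody r)" by simp
    then have "body_atoms b \<subseteq> rule_atoms r" by (rule body_atoms_sub)
    then show "reduce_elem I b = reduce_elem J b"
      using assms that by (intro reduce_elem_cong) blast
  qed
  have h2: "(\<forall>b\<in>set (rbody r). is_naf b \<longrightarrow> bval I b \<noteq> vzero)
      = (\<forall>b\<in>set (rbody r). is_naf b \<longrightarrow> bval J b \<noteq> vzero)" if "r \<in> P" for r
  proof -
    have "bval I b = bval J b" if "b \<in> set (rbody r)" for b
    proof -
      have "body_atoms b \<subseteq> rule_atoms r" using that by (rule body_atoms_sub)
      then show ?thesis using assms \<open>r \<in> P\<close> by (intro bval_cong) blast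
    qed
    then show ?thesis by auto
  qed
  have eqS: "{r\<in>P. \<forall>b\<in>set (rbody r). is_naf b \<longrightarrow> bval I b \<noteq> vzero}
      = {r\<in>P. \<forall>b\<in>set (rbody r). is_naf b \<longrightarrow> bval J b \<noteq> vzero}"
    using h2 by blast
  have "(\<lambda>r. Rule (rlab r) (rhead r) (map (reduce_elem I) (filter (\<lambda>b. \<not> is_naf b) (rbody r))))
      ` {r\<in>P. \<forall>b\<in>set (rbody r). is_naf b \<longrightarrow> bval J b \<noteq> vzero}
    = (\<lambda>r. Rule (rlab r) (rhead r) (map (reduce_elem J) (filter (\<lambda>b. \<not> is_naf b) (rbody r))))
      ` {r\<in>P. \<forall>b\<in>set (rbody r). is_naf b \<longrightarrow> bval J b \<noteq> vzero}"
  proof (rule image_cong[OF refl])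
    fix r assume "r \<in> {r\<in>P. \<forall>b\<in>set (rbody r). is_naf b \<longrightarrow> bval J b \<noteq> vzero}"
    then have "r \<in> P" by blast
    then show "Rule (rlab r) (rhead r) (map (reduce_elem I) (filter (\<lambda>b. \<not> is_naf b) (rbody r)))
      = Rule (rlab r) (rhead r) (map (reduce_elem J) (filter (\<lambda>b. \<not> is_naf b) (rbody r)))"
      using h1 by simp
  qed
  then show ?thesis unfolding reduct_img eqS .
qed

lemma reduct_union: "reduct (A \<union> B) I = reduct A I \<union> reduct B I"
  unfolding reduct_def by blast

lemma reduct_interp_prog: "reduct (interp_prog J) I = interp_prog J"
proof
  show "reduct (interp_prog J) I \<subseteq> interp_prog J"
    unfolding reduct_def interp_prog_def by auto
  show "interp_prog J \<subseteq> reduct (interp_prog J) I"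
  proof
    fix x assume "x \<in> interp_prog J"
    then obtain A where A: "x = Rule None A [Tm (J A)]" unfolding interp_prog_def by blast
    then have "x = Rule (rlab x) (rhead x) (map (reduce_elem I) (filter (\<lambda>b. \<not> is_naf b) (rbody x)))"
      by simp
    moreover have "\<forall>b\<in>set (rbody x). is_naf b \<longrightarrow> bval I b \<noteq> vzero" using A by simp
    ultimately show "x \<in> reduct (interp_prog J) I" unfolding reduct_def
      using \<open>x \<in> interp_prog J\<close> by blast
  qed
qed

lemma reduct_atoms:
  assumes "r' \<in> reduct P I"
  shows "\<exists>r\<in>P. rhead r' = rhead r \<and> rule_atoms r' \<subseteq> rule_atoms r"
proof -
  have ba: "body_atoms (reduce_elem I b) = body_atoms b" for b by (cases b) auto
  from assms obtain r where r: "r \<in> P"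
    "r' = Rule (rlab r) (rhead r) (map (reduce_elem I) (filter (\<lambda>b. \<not> is_naf b) (rbody r)))"
    unfolding reduct_def by blast
  then show ?thesis using ba by (auto simp: rule_atoms_def)
qed

lemma reduct_query_mono: "monotonic_query (reduct_query \<psi> t)"
  unfolding monotonic_query_def reduct_query_def by blast

lemma reduct_shape:
  assumes "r' \<in> reduct P I" "b \<in> set (rbody r')"
  shows "(\<exists>t. b = Tm t) \<or> (\<exists>\<psi> A. b = Pos \<psi> A \<and> monotonic_query \<psi>)"
proof -
  from assms obtain r where r: "r \<in> P"
    "r' = Rule (rlab r) (rhead r) (map (reduce_elem I) (filter (\<lambda>b. \<not> is_naf b) (rbody r)))"
    unfolding reduct_def by blast
  then obtain b0 where b0: "b = reduce_elem I b0" "\<not> is_naf b0" using assms by auto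
  then show ?thesis using reduct_query_mono by (cases b0) auto
qed

lemma causal_empty: "causal_graph {}"
  by (simp add: causal_graph_def trans_def)

lemma value_up: "is_value t \<Longrightarrow> G \<in> t \<Longrightarrow> causal_graph H \<Longrightarrow> G \<subseteq> H \<Longrightarrow> H \<in> t"
  unfolding is_value_def by blast

lemma value_causal: "is_value t \<Longrightarrow> G \<in> t \<Longrightarrow> causal_graph G"
  unfolding is_value_def by blast

lemma gconcat_sub: "G1 \<subseteq> gconcat G1 G2"
proof -
  have "G1 \<subseteq> G1 \<union> G2 \<union> verts G1 \<times> verts G2" by (rule subsetI) (rule UnI1, rule UnI1)
  also have "\<dots> \<subseteq> (G1 \<union> G2 \<union> verts G1 \<times> verts G2)\<^sup>+" by (rule subsetI) (erule r_into_trancl')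
  finally show ?thesis unfolding gconcat_def .
qed

lemma verts_empty: "verts {} = {}" unfolding verts_def by simp

lemma gconcat_empty: assumes "causal_graph H" shows "gconcat H {} = H"
proof -
  have "trans H" using assms unfolding causal_graph_def by blast
  then have "H\<^sup>+ = H" by (rule trancl_id)
  then show ?thesis unfolding gconcat_def verts_empty by simp
qed

lemma vapp_one: assumes "is_value t" shows "vapp (vprod {t}) vone = t"
proof
  have vp: "vprod {t} = t" using value_causal[OF assms] unfolding vprod_def by blast
  show "vapp (vprod {t}) vone \<subseteq> t"
  proof
    fix H assume "H \<in> vapp (vprod {t}) vone"
    then obtain G1 G2 where h: "causal_graph H" "G1 \<in> t" "gconcat G1 G2 \<subseteq> H"
      unfolding vapp_def vp by blast
    have "G1 \<subseteq> H" using gconcat_sub[of G1 G2] h(3) by (rule subset_trans)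
    then show "H \<in> t" using value_up[OF assms h(2) h(1)] by simp
  qed
  show "t \<subseteq> vapp (vprod {t}) vone"
  proof
    fix H assume H: "H \<in> t"
    then have c: "causal_graph H" using value_causal[OF assms] by blast
    have e: "{} \<in> vone" unfolding vone_def using causal_empty by simp
    have "gconcat H {} \<subseteq> H" using gconcat_empty[OF c] by simp
    then have "\<exists>G1\<in>t. \<exists>G2\<in>vone. gconcat G1 G2 \<subseteq> H" using H e by blast
    then show "H \<in> vapp (vprod {t}) vone" unfolding vapp_def vp using c by blast
  qed
qed

lemma interp_sat:
  assumes "is_interp J"
  shows "(\<forall>r\<in>interp_prog J. sat N r) \<longleftrightarrow> (\<forall>A. J A \<subseteq> N A)"
proof
  assume h: "\<forall>r\<in>interp_prog J. sat N r"
  show "\<forall>A. J A \<subseteq> N A"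
  proof
    fix A
    have "Rule None A [Tm (J A)] \<in> interp_prog J" unfolding interp_prog_def by blast
    then have "sat N (Rule None A [Tm (J A)])" using h by blast
    moreover have "is_value (J A)" using assms unfolding is_interp_def by blast
    ultimately show "J A \<subseteq> N A" using vapp_one[of "J A"] by (simp add: sat_def)
  qed
next
  assume h: "\<forall>A. J A \<subseteq> N A"
  show "\<forall>r\<in>interp_prog J. sat N r"
  proof
    fix r assume "r \<in> interp_prog J"
    then obtain A where A: "r = Rule None A [Tm (J A)]" unfolding interp_prog_def by blast
    have "is_value (J A)" using assms unfolding is_interp_def by blast
    then show "sat N r" using vapp_one[of "J A"] h A by (simp add: sat_def)
  qed
qed

lemma value_empty: "is_value {}" by (simp add: is_value_def)
lemma value_vone: "is_value vone" by (simp add: is_value_def vone_def)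

definition mingr :: "'l val \<Rightarrow> 'l graph \<Rightarrow> bool" where
  "mingr W m \<longleftrightarrow> m \<in> W \<and> (\<forall>h\<in>W. h \<subseteq> m \<longrightarrow> h = m)"

definition Dset :: "'l val \<Rightarrow> 'l val" where
  "Dset W = {h. causal_graph h \<and> (\<exists>g\<in>W. g \<subseteq> h \<and> (\<forall>m. mingr W m \<longrightarrow> \<not> m \<subseteq> g))}"

lemma value_VD: assumes V: "is_value V" and W: "is_value W" shows "is_value (V \<union> Dset W)"
  unfolding is_value_def
proof (intro conjI ballI allI impI)
  fix G assume "G \<in> V \<union> Dset W"
  then show "causal_graph G" using value_causal[OF V] unfolding Dset_def by blast
next
  fix G H assume G: "G \<in> V \<union> Dset W" and H: "causal_graph H \<and> G \<subseteq> H"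
  show "H \<in> V \<union> Dset W"
  proof (cases "G \<in> V")
    case True then show ?thesis using value_up[OF V True] H by blast
  next
    case False
    then have "G \<in> Dset W" using G by blast
    then obtain g where g: "g \<in> W" "g \<subseteq> G" "\<forall>m. mingr W m \<longrightarrow> \<not> m \<subseteq> g"
      unfolding Dset_def by blast
    have "g \<subseteq> H" using g(2) H by (meson subset_trans)
    then have "H \<in> Dset W" unfolding Dset_def using H g(1,3) by blast
    then show ?thesis by blast
  qed
qed

lemma key:
  assumes V: "is_value V" and W: "is_value W" and VW: "V \<subseteq> W" and mx: "maxle G (V \<union> Dset W)"
  shows "maxle G V" and "\<exists>G'. maxle G' W \<and> G \<subseteq> G'"
proof -
  from mx obtain g where g: "causal_graph g" "G = up g" unfolding maxle_def is_cvalue_def by blast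
  have gin: "g \<in> up g" using g by (simp add: up_def)
  have sub: "G \<subseteq> V \<union> Dset W" and nomax: "\<not> (\<exists>G'. is_cvalue G' \<and> G \<subset> G' \<and> G' \<subseteq> V \<union> Dset W)"
    using mx by (auto simp: maxle_def)
  have gD: "g \<notin> Dset W"
  proof
    assume "g \<in> Dset W"
    then obtain g0 where g0: "g0 \<in> W" "g0 \<subseteq> g" "\<forall>m. mingr W m \<longrightarrow> \<not> m \<subseteq> g0"
      unfolding Dset_def by blast
    then have "\<not> mingr W g0" by blast
    then obtain h where h: "h \<in> W" "h \<subseteq> g0" "h \<noteq> g0" using g0 unfolding mingr_def by blast
    have ch: "causal_graph h" using h W unfolding is_value_def by blast
    have nm: "\<forall>m. mingr W m \<longrightarrow> \<not> m \<subseteq> h"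
    proof (intro allI impI notI)
      fix m assume "mingr W m" "m \<subseteq> h"
      then have "m \<subseteq> g0" using h(2) by (rule_tac subset_trans) auto
      then show False using g0(3) \<open>mingr W m\<close> by blast
    qed
    have hD: "up h \<subseteq> Dset W"
    proof
      fix x assume "x \<in> up h"
      then have "causal_graph x" "h \<subseteq> x" unfolding up_def by auto
      then show "x \<in> Dset W" unfolding Dset_def using h(1) nm by blast
    qed
    have "up g \<subset> up h"
    proof
      show "up g \<subseteq> up h" using h g0 by (auto simp: up_def)
      have "h \<in> up h" using ch by (simp add: up_def)
      moreover have "h \<notin> up g" using h g0 by (auto simp: up_def)
      ultimately show "up g \<noteq> up h" by blast
    qed
    moreover have "is_cvalue (up h)" using ch by (auto simp: is_cvalue_def)
    ultimately show False using nomax hD g by blast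
  qed
  then have gV: "g \<in> V" using sub g gin by blast
  have GV: "G \<subseteq> V"
  proof
    fix x assume "x \<in> G"
    then have "causal_graph x" "g \<subseteq> x" using g unfolding up_def by auto
    then show "x \<in> V" using gV V unfolding is_value_def by blast
  qed
  show "maxle G V" using mx GV unfolding maxle_def by blast
  have gW: "g \<in> W" using gV VW by blast
  obtain m where m: "mingr W m" "m \<subseteq> g" using gD gW g unfolding Dset_def by blast
  have mW: "m \<in> W" using m unfolding mingr_def by blast
  have cm: "causal_graph m" using mW W unfolding is_value_def by blast
  have "maxle (up m) W"
    unfolding maxle_def
  proof (intro conjI notI)
    show "is_cvalue (up m)" using cm by (auto simp: is_cvalue_def)
    show "up m \<subseteq> W"
    proof
      fix x assume "x \<in> up m"
      then have "causal_graph x" "m \<subseteq> x" unfolding up_def by auto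
      then show "x \<in> W" using mW W unfolding is_value_def by blast
    qed
    assume "\<exists>G'. is_cvalue G' \<and> up m \<subset> G' \<and> G' \<subseteq> W"
    then obtain g'' where g'': "causal_graph g''" "up m \<subset> up g''" "up g'' \<subseteq> W"
      unfolding is_cvalue_def by blast
    have "g'' \<in> W" using g'' by (auto simp: up_def)
    moreover have "g'' \<subseteq> m" using g'' cm by (auto simp: up_def)
    ultimately have "g'' = m" using m by (auto simp: mingr_def)
    then show False using g'' by blast
  qed
  moreover have "G \<subseteq> up m" using g m by (auto simp: up_def)
  ultimately show "\<exists>G'. maxle G' W \<and> G \<subseteq> G'" by blast
qed

lemma qval_sub:
  assumes "monotonic_query \<psi>" "is_value (I A)" "is_value (N A)"
    "\<forall>G. maxle G (I A) \<longrightarrow> (\<exists>G'. maxle G' (N A) \<and> G \<subseteq> G')"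
  shows "qval I \<psi> A \<subseteq> qval N \<psi> A"
proof
  fix h assume "h \<in> qval I \<psi> A"
  then obtain G where G: "h \<in> G" "maxle G (I A)" "\<psi> G (I A)" unfolding qval_def vsum_def by blast
  then obtain G' where G': "maxle G' (N A)" "G \<subseteq> G'" using assms by blast
  have c1: "is_cvalue G" using G(2) unfolding maxle_def by blast
  have c2: "is_cvalue G'" using G'(1) unfolding maxle_def by blast
  have "\<psi> G' (N A)" using assms(1) c1 c2 G(3) G'(2) assms(2,3) unfolding monotonic_query_def by blast
  then show "h \<in> qval N \<psi> A" using G G' unfolding qval_def vsum_def by blast
qed

theorem theorem3:
  fixes P Pb Pt :: "('a, 'l) program" and I :: "'a \<Rightarrow> 'l val"
  assumes "causal_program P"
    and "Pb \<union> Pt = P" and "Pb \<inter> Pt = {}"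
    and "\<forall>r\<in>Pt. \<forall>s\<in>Pb. rhead r \<notin> rule_atoms s"
  shows "stable_model P I \<longleftrightarrow>
         (\<exists>J. stable_model Pb J \<and> stable_model (interp_prog J \<union> Pt) I)"
proof -
  define U where "U = \<Union> (rule_atoms ` Pb)"
  have PtU: "rhead r \<notin> U" if "r \<in> Pt" for r
    using assms(4) that unfolding U_def by blast
  have redP: "reduct P K = reduct Pb K \<union> reduct Pt K" for K
    using assms(2) reduct_union by metis
  have RbU: "rule_atoms r \<subseteq> U" if rr: "r \<in> reduct Pb K" for K r
  proof -
    obtain r0 where "r0 \<in> Pb" "rule_atoms r \<subseteq> rule_atoms r0" using reduct_atoms[OF rr] by blast
    then show ?thesis unfolding U_def by blast
  qed
  have RtU: "rhead r \<notin> U" if rr: "r \<in> reduct Pt K" for K r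
  proof -
    obtain r0 where "r0 \<in> Pt" "rhead r = rhead r0" using reduct_atoms[OF rr] by blast
    then show ?thesis using PtU by simp
  qed
  have redPb_cong: "reduct Pb K1 = reduct Pb K2" if "\<forall>A\<in>U. K1 A = K2 A" for K1 K2
    using that unfolding U_def by (intro reduct_cong) blast
  have headU: "rhead r \<in> U" if "r \<in> reduct Pb K" for K r
    using RbU[OF that] by (auto simp: rule_atoms_def)
  have batU: "A \<in> U" if "r \<in> reduct Pb K" "Pos \<psi> A \<in> set (rbody r)" for K r \<psi> A
    using RbU[OF that(1)] body_atoms_sub[OF that(2)] by auto
  have redI: "reduct (interp_prog J \<union> Pt) K = interp_prog J \<union> reduct Pt K" for J K
    using reduct_union reduct_interp_prog by metis
  show ?thesis
  proof
    assume st: "stable_model P I"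
    then have mI: "is_model (reduct P I) I" and lI: "\<And>M. is_model (reduct P I) M \<Longrightarrow> \<forall>A. I A \<subseteq> M A"
      unfolding stable_model_def least_model_def by blast+
    have iI: "is_interp I" and sI0: "\<forall>r\<in>reduct P I. sat I r" using mI unfolding is_model_sat by blast+
    have sI: "\<forall>r\<in>reduct Pb I \<union> reduct Pt I. sat I r" using sI0 unfolding redP .
    define J where "J = (\<lambda>A. if A \<in> U then I A else {})"
    have JU: "\<forall>A\<in>U. J A = I A" unfolding J_def by simp
    have iJ: "is_interp J" using iI unfolding is_interp_def J_def by (auto simp: value_empty)
    have redJ: "reduct Pb J = reduct Pb I" using redPb_cong JU by blast
    have JleI: "J A \<subseteq> I A" for A unfolding J_def by simp
    have stJ: "stable_model Pb J"
      unfolding stable_model_def least_model_def redJ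
    proof (intro conjI allI impI)
      show "is_model (reduct Pb I) J" unfolding is_model_sat
      proof (intro conjI ballI)
        show "is_interp J" by (rule iJ)
        fix r assume r: "r \<in> reduct Pb I"
        then have "sat I r" using sI by blast
        then show "sat J r" using sat_cong[OF RbU[OF r] JU] by simp
      qed
    next
      fix N A assume N: "is_model (reduct Pb I) N"
      define K where "K = (\<lambda>A. if A \<in> U then N A else vone)"
      have KU: "\<forall>A\<in>U. K A = N A" unfolding K_def by simp
      have iN: "is_interp N" and sN: "\<forall>r\<in>reduct Pb I. sat N r" using N unfolding is_model_sat by blast+
      have "is_model (reduct P I) K" unfolding is_model_sat redP
      proof (intro conjI ballI)
        show "is_interp K" using iN unfolding is_interp_def K_def by (auto simp: value_vone)
        fix r assume r: "r \<in> reduct Pb I \<union> reduct Pt I"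
        show "sat K r"
        proof (cases "r \<in> reduct Pb I")
          case True
          then show ?thesis using sN sat_cong[OF RbU[OF True] KU] by simp
        next
          case False
          then have "r \<in> reduct Pt I" using r by blast
          then have "K (rhead r) = vone" using RtU unfolding K_def by simp
          then show ?thesis by (rule sat_vone)
        qed
      qed
      then have "I A \<subseteq> K A" using lI by blast
      then show "J A \<subseteq> N A" unfolding J_def K_def by (auto split: if_splits)
    qed
    have stI: "stable_model (interp_prog J \<union> Pt) I"
      unfolding stable_model_def least_model_def redI
    proof (intro conjI allI impI)
      show "is_model (interp_prog J \<union> reduct Pt I) I" unfolding is_model_sat
      proof (intro conjI ballI)
        show "is_interp I" by (rule iI)
        fix r assume r: "r \<in> interp_prog J \<union> reduct Pt I"
        show "sat I r"
        proof (cases "r \<in> interp_prog J")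
          case True
          then show ?thesis using interp_sat[OF iJ, of I] JleI by blast
        next
          case False
          then show ?thesis using r sI redP by blast
        qed
      qed
    next
      fix N A assume N: "is_model (interp_prog J \<union> reduct Pt I) N"
      have iN: "is_interp N" and sN: "\<forall>r\<in>interp_prog J \<union> reduct Pt I. sat N r"
        using N unfolding is_model_sat by blast+
      have JN: "\<forall>A. J A \<subseteq> N A" using sN interp_sat[OF iJ, of N] by blast
      have sNt: "\<forall>r\<in>reduct Pt I. sat N r" using sN by blast
      have vI: "is_value (I A)" for A using iI unfolding is_interp_def by blast
      have vN: "is_value (N A)" for A using iN unfolding is_interp_def by blast
      have IN: "I A \<subseteq> N A" if "A \<in> U" for A using JN JU that by metis
      define M where "M = (\<lambda>A. if A \<in> U then I A \<union> Dset (N A) else N A)"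
      have vM: "is_value (M A)" for A
        unfolding M_def using value_VD[OF vI vN] vN by (cases "A \<in> U") simp_all
      have qI: "qval M \<psi> A \<subseteq> qval I \<psi> A" if "monotonic_query \<psi>" "A \<in> U" for \<psi> A
      proof (rule qval_sub[where I=M and N=I and A=A, OF that(1) vM vI], intro allI impI)
        fix G assume "maxle G (M A)"
        then have "maxle G (I A)" using key(1)[OF vI vN IN[OF that(2)]] that(2) unfolding M_def by simp
        then show "\<exists>G'. maxle G' (I A) \<and> G \<subseteq> G'" by blast
      qed
      have qN: "qval M \<psi> A \<subseteq> qval N \<psi> A" if "monotonic_query \<psi>" for \<psi> A
      proof (cases "A \<in> U")
        case True
        show ?thesis
        proof (rule qval_sub[where I=M and N=N and A=A, OF that(1) vM vN], intro allI impI)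
          fix G assume "maxle G (M A)"
          then show "\<exists>G'. maxle G' (N A) \<and> G \<subseteq> G'"
            using key(2)[OF vI vN IN[OF True]] True unfolding M_def by simp
        qed
      next
        case False
        then show ?thesis unfolding M_def qval_def by simp
      qed
      have "is_model (reduct P I) M" unfolding is_model_sat redP
      proof (intro conjI ballI)
        show "is_interp M" using vM unfolding is_interp_def by blast
        fix r assume r: "r \<in> reduct Pb I \<union> reduct Pt I"
        show "sat M r"
        proof (cases "r \<in> reduct Pb I")
          case True
          have "\<forall>b\<in>set (rbody r). bval M b \<subseteq> bval I b"
          proof
            fix b assume b: "b \<in> set (rbody r)"
            from reduct_shape[OF True b] show "bval M b \<subseteq> bval I b"
            proof
              assume "\<exists>t. b = Tm t" then show ?thesis by auto
            next
              assume "\<exists>\<psi> A. b = Pos \<psi> A \<and> monotonic_query \<psi>"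
              then obtain \<psi> A where "b = Pos \<psi> A" "monotonic_query \<psi>" by blast
              then show ?thesis using qI batU[OF True] b by auto
            qed
          qed
          then have "vapp (vprod (bval M ` set (rbody r))) (rlabel (rlab r))
              \<subseteq> vapp (vprod (bval I ` set (rbody r))) (rlabel (rlab r))" by (rule body_le)
          also have "\<dots> \<subseteq> I (rhead r)" using sI True unfolding sat_def by blast
          also have "\<dots> \<subseteq> M (rhead r)" using headU[OF True] unfolding M_def by simp
          finally show ?thesis unfolding sat_def .
        next
          case False
          then have rt: "r \<in> reduct Pt I" using r by blast
          have "\<forall>b\<in>set (rbody r). bval M b \<subseteq> bval N b"
          proof
            fix b assume b: "b \<in> set (rbody r)"
            from reduct_shape[OF rt b] show "bval M b \<subseteq> bval N b"
            proof
              assume "\<exists>t. b = Tm t" then show ?thesis by auto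
            next
              assume "\<exists>\<psi> A. b = Pos \<psi> A \<and> monotonic_query \<psi>"
              then obtain \<psi> A where "b = Pos \<psi> A" "monotonic_query \<psi>" by blast
              then show ?thesis using qN by auto
            qed
          qed
          then have "vapp (vprod (bval M ` set (rbody r))) (rlabel (rlab r))
              \<subseteq> vapp (vprod (bval N ` set (rbody r))) (rlabel (rlab r))" by (rule body_le)
          also have "\<dots> \<subseteq> N (rhead r)" using sNt rt unfolding sat_def by blast
          also have "\<dots> = M (rhead r)" using RtU[OF rt] unfolding M_def by simp
          finally show ?thesis unfolding sat_def .
        qed
      qed
      then have "I A \<subseteq> M A" using lI by blast
      then show "I A \<subseteq> N A" using IN unfolding M_def by (cases "A \<in> U") auto
    qed
    show "\<exists>J. stable_model Pb J \<and> stable_model (interp_prog J \<union> Pt) I" using stJ stI by blast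
  next
    assume "\<exists>J. stable_model Pb J \<and> stable_model (interp_prog J \<union> Pt) I"
    then obtain J where stJ: "stable_model Pb J" and stI: "stable_model (interp_prog J \<union> Pt) I" by blast
    have mJ: "is_model (reduct Pb J) J" and lJ: "\<And>M. is_model (reduct Pb J) M \<Longrightarrow> \<forall>A. J A \<subseteq> M A"
      using stJ unfolding stable_model_def least_model_def by blast+
    have mI: "is_model (interp_prog J \<union> reduct Pt I) I"
      and lI: "\<And>M. is_model (interp_prog J \<union> reduct Pt I) M \<Longrightarrow> \<forall>A. I A \<subseteq> M A"
      using stI unfolding stable_model_def least_model_def redI by blast+
    have iJ: "is_interp J" and sJ: "\<forall>r\<in>reduct Pb J. sat J r" using mJ unfolding is_model_sat by blast+
    have iI: "is_interp I" and sI: "\<forall>r\<in>interp_prog J \<union> reduct Pt I. sat I r" using mI unfolding is_model_sat by blast+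
    have JI: "\<forall>A. J A \<subseteq> I A" using sI interp_sat[OF iJ, of I] by blast
    have J0: "J A = {}" if "A \<notin> U" for A
    proof -
      define J' where "J' = (\<lambda>A. if A \<in> U then J A else {})"
      have J'U: "\<forall>A\<in>U. J' A = J A" unfolding J'_def by simp
      have "is_model (reduct Pb J) J'" unfolding is_model_sat
      proof (intro conjI ballI)
        show "is_interp J'" using iJ unfolding is_interp_def J'_def by (auto simp: value_empty)
        fix r assume r: "r \<in> reduct Pb J"
        then show "sat J' r" using sJ sat_cong[OF RbU[OF r] J'U] by simp
      qed
      then have "J A \<subseteq> J' A" using lJ by blast
      then show ?thesis using that unfolding J'_def by simp
    qed
    have IJ: "\<forall>A\<in>U. I A = J A"
    proof
      fix A assume A: "A \<in> U"
      define N where "N = (\<lambda>A. if A \<in> U then J A else vone)"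
      have "is_model (interp_prog J \<union> reduct Pt I) N" unfolding is_model_sat
      proof (intro conjI ballI)
        show iN: "is_interp N" using iJ unfolding is_interp_def N_def by (auto simp: value_vone)
        fix r assume r: "r \<in> interp_prog J \<union> reduct Pt I"
        show "sat N r"
        proof (cases "r \<in> interp_prog J")
          case True
          have "J A \<subseteq> N A" for A
          proof (cases "A \<in> U")
            case True then show ?thesis unfolding N_def by simp
          next
            case False
            have "is_value (J A)" using iJ unfolding is_interp_def by blast
            then show ?thesis using False value_causal unfolding N_def vone_def by auto
          qed
          then show ?thesis using True interp_sat[OF iJ, of N] by blast
        next
          case False
          then have "r \<in> reduct Pt I" using r by blast
          then have "N (rhead r) = vone" using RtU unfolding N_def by simp
          then show ?thesis by (rule sat_vone)
        qed
      qed
      then have "I A \<subseteq> N A" using lI by blast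
      then show "I A = J A" using JI A unfolding N_def by (simp add: subset_antisym)
    qed
    have redIJ: "reduct Pb I = reduct Pb J" using redPb_cong IJ by blast
    show "stable_model P I"
      unfolding stable_model_def least_model_def redP redIJ
    proof (intro conjI allI impI)
      show "is_model (reduct Pb J \<union> reduct Pt I) I" unfolding is_model_sat
      proof (intro conjI ballI)
        show "is_interp I" by (rule iI)
        fix r assume r: "r \<in> reduct Pb J \<union> reduct Pt I"
        show "sat I r"
        proof (cases "r \<in> reduct Pb J")
          case True
          then show ?thesis using sJ sat_cong[OF RbU[OF True] IJ] by simp
        next
          case False
          then show ?thesis using r sI by blast
        qed
      qed
    next
      fix M A assume M: "is_model (reduct Pb J \<union> reduct Pt I) M"
      then have iM: "is_interp M" and sM: "\<forall>r\<in>reduct Pb J \<union> reduct Pt I. sat M r"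
        unfolding is_model_sat by blast+
      have "is_model (reduct Pb J) M" unfolding is_model_sat using iM sM by blast
      then have JM: "\<forall>A. J A \<subseteq> M A" using lJ by blast
      have "is_model (interp_prog J \<union> reduct Pt I) M" unfolding is_model_sat
        using iM sM JM interp_sat[OF iJ, of M] by blast
      then show "I A \<subseteq> M A" using lI by blast
    qed
  qed
qed

end
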